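(* For every $\gamma\in[0,1)$, the function $h_\gamma(\mu)=\mu+\frac{\gamma}{1-\gamma}\gamma^{\mu}$ is monotonically increasing in $\mu$ on $(0,\infty)$. *)

theory Defs
  imports Complex_Main
begin

definition h_gamma :: "real \<Rightarrow> real \<Rightarrow> real" where
  "h_gamma \<gamma> \<mu> = \<mu> + \<gamma> / (1 - \<gamma>) * \<gamma> powr \<mu>"

end

theory Submission
  imports Defs
begin

theorem lemma2:
  fixes \<gamma> :: real
  assumes "0 \<le> \<gamma>" and "\<gamma> < 1"
  shows "mono_on {0<..} (h_gamma \<gamma>)"
proof (cases "\<gamma> = 0")
  case True
  then show ?thesis by (auto simp: mono_on_def h_gamma_def)
next
  case False
  with assms have g0: "0 < \<gamma>" by simp
  let ?c = "\<gamma> / (1 - \<gamma>)"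
  have lnb: "ln \<gamma> \<ge> 1 - 1 / \<gamma>"
    using ln_le_minus_one[of "1/\<gamma>"] g0 by (simp add: ln_div)
  have key: "\<gamma> * ln \<gamma> \<ge> -(1 - \<gamma>)"
  proof -
    have "\<gamma> * (1 - 1 / \<gamma>) \<le> \<gamma> * ln \<gamma>" using mult_left_mono[OF lnb, of \<gamma>] g0 by simp
    moreover have "\<gamma> * (1 - 1 / \<gamma>) = \<gamma> - 1" using g0 by (simp add: field_simps)
    ultimately show ?thesis by simp
  qed
  have der: "DERIV (h_gamma \<gamma>) x :> 1 + ?c * (\<gamma> powr x * ln \<gamma>)" for x
  proof -
    have "DERIV (\<lambda>x. exp (x * ln \<gamma>)) x :> exp (x * ln \<gamma>) * ln \<gamma>"
      by (auto intro!: derivative_eq_intros)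
    then have "DERIV (\<lambda>x. \<gamma> powr x) x :> \<gamma> powr x * ln \<gamma>"
      using g0 by (simp add: powr_def)
    then show ?thesis unfolding h_gamma_def
      using assms by (auto intro!: derivative_eq_intros)
  qed
  have nn: "1 + ?c * (\<gamma> powr x * ln \<gamma>) \<ge> 0" if "x > 0" for x
  proof -
    have p1: "\<gamma> powr x \<le> 1" using g0 assms that by (intro powr_le1) auto
    have p0: "\<gamma> powr x \<ge> 0" by simp
    have lnneg: "ln \<gamma> \<le> 0" using g0 assms by simp
    have "\<gamma> powr x * (\<gamma> * ln \<gamma>) \<ge> 1 * (\<gamma> * ln \<gamma>)"
      using mult_right_mono_neg[OF p1, of "\<gamma> * ln \<gamma>"] g0 lnneg
      by (simp add: mult_nonneg_nonpos)
    then have "\<gamma> powr x * (\<gamma> * ln \<gamma>) \<ge> -(1 - \<gamma>)" using key by linarith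
    then have "(\<gamma> powr x * (\<gamma> * ln \<gamma>)) / (1 - \<gamma>) \<ge> -1"
      using assms by (simp add: field_simps)
    then show ?thesis by (simp add: field_simps)
  qed
  show ?thesis
    unfolding mono_on_def
  proof (intro allI impI)
    fix r s :: real
    assume "r \<in> {0<..} \<and> s \<in> {0<..} \<and> r \<le> s"
    then have r: "r > 0" "r \<le> s" by auto
    show "h_gamma \<gamma> r \<le> h_gamma \<gamma> s"
      by (rule DERIV_nonneg_imp_increasing_open[OF r(2)])
         (use der nn r in \<open>force intro: DERIV_continuous continuous_at_imp_continuous_on\<close>)+
  qed
qed

end
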